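(* Let $(Z_k,\tilde Z_k)_{k\in\mathbb{N}}$ be given by the iterated one-shot (reflection) coupling of the linear chains described below, with $\Delta z=\tilde z-z\ne0$. Then for every $n\ge1$, \[ \mathbb P(Z_n\ne\tilde Z_n)=2\Phi\Bigl(\frac{1}{2\Theta_n^{1/2}}\Bigr)-1,\qquad \Theta_n=\sum_{k=1}^n\frac{1}{|B_k^{-1}\Pi_k\Delta z|^2},\quad \Pi_k=A_kA_{k-1}\cdots A_1. \]
   Context: Let $A_k,B_k\in\mathbb{R}^{d\times d}$, $k\ge1$, be non-singular, and $z,\tilde z\in\mathbb{R}^d$. Let $(\xi_k)_{k\ge1}$ be iid $\mathcal N(0,I_d)$ and $(U_k)_{k\ge1}$ iid $\mathrm{Unif}(0,1)$, independent of each other. Set $Z_0=z$, $\tilde Z_0=\tilde z$, and inductively for $k\ge1$: $E_k=B_k^{-1}A_k(\tilde Z_{k-1}-Z_{k-1})$, $e_k=E_k/|E_k|$ if $E_k\ne0$ and $e_k=0$ otherwise, $p_k(w)=\exp(-|E_k|^2/2+\langle E_k,w\rangle)$ for $w\in\mathbb{R}^d$, $\tilde\xi_k=\mathbf 1_{\{U_k\le p_k(\xi_k)\}}(\xi_k-E_k)+\mathbf 1_{\{U_k>p_k(\xi_k)\}}(I_d-2e_ke_k^T)\xi_k$, and $Z_k=A_kZ_{k-1}+B_k\xi_k$, $\tilde Z_k=A_k\tilde Z_{k-1}+B_k\tilde\xi_k$. $\Phi$ is the standard normal cumulative distribution function. *)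

theory Defs
  imports "HOL-Probability.Probability"
begin

definition Phi :: "real \<Rightarrow> real" where
  "Phi x = cdf (density lborel std_normal_density) x"

definition std_normal_vec :: "(real ^ 'd) measure" where
  "std_normal_vec = density lborel
     (\<lambda>x. ennreal ((2 * pi) powr (- real CARD('d) / 2) * exp (- (norm x)\<^sup>2 / 2)))"

definition unif01 :: "real measure" where
  "unif01 = uniform_measure lborel {0<..<1}"

fun coupling ::
  "(nat \<Rightarrow> real^'d^'d) \<Rightarrow> (nat \<Rightarrow> real^'d^'d) \<Rightarrow> real^'d \<Rightarrow> real^'d \<Rightarrow>
   (nat \<Rightarrow> real^'d) \<Rightarrow> (nat \<Rightarrow> real) \<Rightarrow> nat \<Rightarrow> (real^'d) \<times> (real^'d)" where
  "coupling A B z zt xi u 0 = (z, zt)"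
| "coupling A B z zt xi u (Suc k) =
     (let (Zp, Ztp) = coupling A B z zt xi u k;
          E = matrix_inv (B (Suc k)) *v (A (Suc k) *v (Ztp - Zp));
          e = (if E = 0 then 0 else (1 / norm E) *\<^sub>R E);
          p = (\<lambda>w. exp (- (norm E)\<^sup>2 / 2 + inner E w));
          x = xi (Suc k);
          xt = (if u (Suc k) \<le> p x then x - E
                else (mat 1 - 2 *\<^sub>R (\<chi> i j. e $ i * e $ j)) *v x)
      in (A (Suc k) *v Zp + B (Suc k) *v x, A (Suc k) *v Ztp + B (Suc k) *v xt))"

fun prodA :: "(nat \<Rightarrow> real^'d^'d) \<Rightarrow> nat \<Rightarrow> real^'d^'d" where
  "prodA A 0 = mat 1"
| "prodA A (Suc k) = A (Suc k) ** prodA A k"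

end

theory Submission
  imports Defs "HOL-Probability.Probability"
begin

lemma probN: "prob_space std_normal_distribution"
  using prob_space_normal_density by simp

lemma char_scaled:
  "char (distr std_normal_distribution borel (\<lambda>x. a*x)) s = complex_of_real (exp (-((a * s)^2)/2))"
proof -
  have "char (distr std_normal_distribution borel (\<lambda>x. a*x)) s = char std_normal_distribution (a * s)"
    unfolding char_def by (subst integral_distr) (auto simp: mult_ac)
  then show ?thesis by (simp add: char_std_normal_distribution)
qed

lemma integral_pair_mult:
  fixes f g :: "real \<Rightarrow> complex"
  assumes [measurable]: "f \<in> borel_measurable borel" "g \<in> borel_measurable borel"
    and bf: "\<And>x. norm (f x) \<le> 1" and bg: "\<And>x. norm (g x) \<le> 1"
  shows "(\<integral>z. f (fst z) * g (snd z) \<partial>(std_normal_distribution \<Otimes>\<^sub>M std_normal_distribution))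
     = (\<integral>x. f x \<partial>std_normal_distribution) * (\<integral>y. g y \<partial>std_normal_distribution)"
proof -
  interpret N: prob_space std_normal_distribution by (rule probN)
  interpret P: pair_prob_space std_normal_distribution std_normal_distribution ..
  have int: "integrable (std_normal_distribution \<Otimes>\<^sub>M std_normal_distribution) (\<lambda>z. f (fst z) * g (snd z))"
    apply (rule P.integrable_const_bound[where B=1])
    using bf bg by (auto simp: norm_mult intro!: mult_le_one AE_I2)
  have "(\<integral>z. f (fst z) * g (snd z) \<partial>(std_normal_distribution \<Otimes>\<^sub>M std_normal_distribution))
     = (\<integral>x. (\<integral>y. f x * g y \<partial>std_normal_distribution) \<partial>std_normal_distribution)"
    using P.integral_fst'[OF int] by simp
  also have "\<dots> = (\<integral>x. f x * (\<integral>y. g y \<partial>std_normal_distribution) \<partial>std_normal_distribution)"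
    by simp
  also have "\<dots> = (\<integral>x. f x \<partial>std_normal_distribution) * (\<integral>y. g y \<partial>std_normal_distribution)"
    by simp
  finally show ?thesis .
qed

lemma distr_lincomb:
  fixes b c :: real
  shows "distr (std_normal_distribution \<Otimes>\<^sub>M std_normal_distribution) borel (\<lambda>z. c * fst z + b * snd z)
    = distr std_normal_distribution borel (\<lambda>x. sqrt (b^2 + c^2) * x)"
proof (rule Levy_uniqueness)
  interpret N: prob_space std_normal_distribution by (rule probN)
  interpret P: pair_prob_space std_normal_distribution std_normal_distribution ..
  show "real_distribution (distr (std_normal_distribution \<Otimes>\<^sub>M std_normal_distribution) borel (\<lambda>z. c * fst z + b * snd z))"
    by (rule P.real_distribution_distr) simp
  show "real_distribution (distr std_normal_distribution borel (\<lambda>x. sqrt (b^2 + c^2) * x))"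
    by (rule N.real_distribution_distr) simp
  show "char (distr (std_normal_distribution \<Otimes>\<^sub>M std_normal_distribution) borel (\<lambda>z. c * fst z + b * snd z))
     = char (distr std_normal_distribution borel (\<lambda>x. sqrt (b^2 + c^2) * x))"
  proof
    fix s
    have "char (distr (std_normal_distribution \<Otimes>\<^sub>M std_normal_distribution) borel (\<lambda>z. c * fst z + b * snd z)) s
      = (\<integral>z. iexp (s * c * fst z) * iexp (s * b * snd z) \<partial>(std_normal_distribution \<Otimes>\<^sub>M std_normal_distribution))"
      unfolding char_def by (subst integral_distr) (auto simp: algebra_simps exp_add[symmetric])
    also have "\<dots> = (\<integral>x. iexp (s * c * x) \<partial>std_normal_distribution) * (\<integral>y. iexp (s * b * y) \<partial>std_normal_distribution)"
      by (rule integral_pair_mult) (auto simp: norm_exp_i_times)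
    also have "\<dots> = char std_normal_distribution (s * c) * char std_normal_distribution (s * b)"
      by (simp add: char_def)
    also have "\<dots> = complex_of_real (exp (-((sqrt (b^2+c^2) * s)^2)/2))"
      by (simp add: char_std_normal_distribution exp_add[symmetric] power_mult_distrib algebra_simps
           flip: of_real_mult)
    also have "\<dots> = char (distr std_normal_distribution borel (\<lambda>x. sqrt (b^2 + c^2) * x)) s"
      by (rule char_scaled[symmetric])
    finally show "char (distr (std_normal_distribution \<Otimes>\<^sub>M std_normal_distribution) borel (\<lambda>z. c * fst z + b * snd z)) s
      = char (distr std_normal_distribution borel (\<lambda>x. sqrt (b^2 + c^2) * x)) s" .
  qed
qed


lemma Phi_eq: "Phi x = measure std_normal_distribution {..x}"
  by (simp add: Phi_def cdf_def)

lemma N_singleton: "measure std_normal_distribution {x} = 0"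
proof -
  have "emeasure std_normal_distribution {x} = 0"
    by (subst emeasure_density) (auto intro!: nn_integral_null_set simp: null_sets_def)
  then show ?thesis by (simp add: measure_def)
qed

lemma Phi_less: "measure std_normal_distribution {..<x} = Phi x"
proof -
  interpret N: prob_space std_normal_distribution by (rule probN)
  have "measure std_normal_distribution ({..<x} \<union> {x}) = measure std_normal_distribution {..<x} + measure std_normal_distribution {x}"
    by (rule N.finite_measure_Union) auto
  moreover have "{..<x} \<union> {x} = {..x}" by auto
  ultimately show ?thesis by (simp add: Phi_eq N_singleton)
qed

lemma Phi_greater: "measure std_normal_distribution {x<..} = 1 - Phi x"
proof -
  interpret N: prob_space std_normal_distribution by (rule probN)
  have "measure std_normal_distribution (space std_normal_distribution - {..x}) = 1 - measure std_normal_distribution {..x}"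
    by (rule N.prob_compl) auto
  moreover have "space std_normal_distribution - {..x} = {x<..}" by auto
  ultimately show ?thesis by (simp add: Phi_eq)
qed

lemma Phi_nonneg: "0 \<le> Phi x" by (simp add: Phi_eq)
lemma Phi_le1: "Phi x \<le> 1"
proof -
  interpret N: prob_space std_normal_distribution by (rule probN)
  show ?thesis by (simp add: Phi_eq)
qed

lemma Phi_mono: "x \<le> y \<Longrightarrow> Phi x \<le> Phi y"
proof -
  interpret N: prob_space std_normal_distribution by (rule probN)
  assume "x \<le> y" then show ?thesis unfolding Phi_eq by (intro N.finite_measure_mono) auto
qed

lemma Phi_measurable[measurable]: "Phi \<in> borel_measurable borel"
  by (rule borel_measurable_mono) (auto simp: mono_def Phi_mono)

lemma N_symm: "distr std_normal_distribution borel uminus = std_normal_distribution"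
proof -
  interpret N: prob_space std_normal_distribution by (rule probN)
  have "distr std_normal_distribution borel (\<lambda>x. (-1) * x) = distr std_normal_distribution borel (\<lambda>x. 1 * x)"
    apply (rule Levy_uniqueness)
      apply (rule N.real_distribution_distr, simp)
     apply (rule N.real_distribution_distr, simp)
    apply (rule ext)
    apply (simp only: char_scaled)
    apply simp
    done
  moreover have "distr std_normal_distribution borel (\<lambda>x. x) = std_normal_distribution"
    by (rule distr_id2) simp
  ultimately show ?thesis by simp
qed

lemma Phi_neg: "Phi (-x) = 1 - Phi x"
proof -
  interpret N: prob_space std_normal_distribution by (rule probN)
  have "Phi (-x) = measure (distr std_normal_distribution borel uminus) {..-x}"
    by (simp add: N_symm Phi_eq)
  also have "\<dots> = measure std_normal_distribution (uminus -` {..-x} \<inter> space std_normal_distribution)"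
    by (rule measure_distr) auto
  also have "uminus -` {..-x} \<inter> space std_normal_distribution = {x..}" by auto
  also have "measure std_normal_distribution {x..} = 1 - measure std_normal_distribution {..<x}"
  proof -
    have "measure std_normal_distribution (space std_normal_distribution - {..<x}) = 1 - measure std_normal_distribution {..<x}"
      by (rule N.prob_compl) auto
    moreover have "space std_normal_distribution - {..<x} = {x..}" by auto
    ultimately show ?thesis by simp
  qed
  finally show ?thesis by (simp add: Phi_less)
qed

lemma N_scaled_le:
  assumes "r > 0"
  shows "measure (distr std_normal_distribution borel (\<lambda>x. r * x)) {..t} = Phi (t / r)"
proof -
  have "measure (distr std_normal_distribution borel (\<lambda>x. r * x)) {..t}
     = measure std_normal_distribution ((\<lambda>x. r * x) -` {..t} \<inter> space std_normal_distribution)"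
    by (rule measure_distr) auto
  also have "(\<lambda>x. r * x) -` {..t} \<inter> space std_normal_distribution = {..t/r}"
    using assms by (auto simp: field_simps)
  finally show ?thesis by (simp add: Phi_eq)
qed

lemma Phi_conv:
  fixes b c t :: real
  assumes b: "b > 0"
  shows "(\<integral>x. Phi ((t - c * x) / b) \<partial>std_normal_distribution) = Phi (t / sqrt (b^2 + c^2))"
proof -
  interpret N: prob_space std_normal_distribution by (rule probN)
  interpret P: pair_prob_space std_normal_distribution std_normal_distribution ..
  let ?P = "std_normal_distribution \<Otimes>\<^sub>M std_normal_distribution"
  let ?A = "{z \<in> space ?P. c * fst z + b * snd z \<le> t}"
  have A[measurable]: "?A \<in> sets ?P" by measurable
  have r: "sqrt (b^2 + c^2) > 0" using b by (simp add: add_pos_nonneg)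
  have "measure ?P ?A = measure (distr ?P borel (\<lambda>z. c * fst z + b * snd z)) {..t}"
  proof -
    have "?A = (\<lambda>z. c * fst z + b * snd z) -` {..t} \<inter> space ?P" by auto
    then show ?thesis by (subst measure_distr) auto
  qed
  also have "\<dots> = Phi (t / sqrt (b^2 + c^2))"
    unfolding distr_lincomb by (rule N_scaled_le[OF r])
  finally have 1: "measure ?P ?A = Phi (t / sqrt (b^2 + c^2))" .
  have "measure ?P ?A = (\<integral>z. indicator ?A z \<partial>?P)" using A by (simp add: sets.Int_space_eq2)
  also have "\<dots> = (\<integral>x. (\<integral>y. indicator ?A (x, y) \<partial>std_normal_distribution) \<partial>std_normal_distribution)"
    by (rule P.integral_fst'[symmetric]) (auto intro!: P.integrable_const_bound[where B=1])
  also have "\<dots> = (\<integral>x. Phi ((t - c * x) / b) \<partial>std_normal_distribution)"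
  proof (rule Bochner_Integration.integral_cong[OF refl])
    fix x
    have "(\<lambda>y. indicator ?A (x, y) :: real) = indicator {..(t - c * x) / b}"
      using b by (auto simp: indicator_def space_pair_measure field_simps fun_eq_iff)
    then show "(\<integral>y. indicator ?A (x, y) \<partial>std_normal_distribution) = Phi ((t - c * x) / b)"
      by (simp add: Phi_eq)
  qed
  finally show ?thesis using 1 by simp
qed


definition G :: "real \<Rightarrow> real \<Rightarrow> real" where
  "G S t = (if S = 0 then sgn t else 2 * Phi (t / (2 * sqrt S)) - 1)"

lemma G_odd: "G S (-t) = - G S t"
  by (simp add: G_def Phi_neg)

lemma G_bound: "\<bar>G S t\<bar> \<le> 1"
  using Phi_nonneg[of "t / (2 * sqrt S)"] Phi_le1[of "t / (2 * sqrt S)"]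
  by (auto simp: G_def sgn_if)

lemma G_meas[measurable]: "G S \<in> borel_measurable borel"
  unfolding G_def by (cases "S = 0") simp_all

lemma G_zero: "G S 0 = 0"
  using Phi_neg[of 0] by (simp add: G_def)

lemma G_pos: "t > 0 \<Longrightarrow> G 0 t = 1"
  by (simp add: G_def)

lemma phi_shift: "std_normal_density x * exp (-(a^2)/2 + a * x) = std_normal_density (x - a)"
  by (simp add: std_normal_density_def exp_add[symmetric] power2_eq_square algebra_simps)

lemma phi_even: "std_normal_density (-x) = std_normal_density x"
  by (simp add: std_normal_density_def)

lemma N_UNIV: "measure std_normal_distribution UNIV = 1"
proof -
  interpret N: prob_space std_normal_distribution by (rule probN)
  show ?thesis using N.prob_space by simp
qed

lemma G_step:
  assumes s: "\<sigma> > 0" and S: "S \<ge> 0"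
  shows "(\<integral>x. G S (t - 2 * x * \<sigma>) \<partial>std_normal_distribution) = G (S + \<sigma>^2) t"
proof -
  interpret N: prob_space std_normal_distribution by (rule probN)
  show ?thesis
  proof (cases "S = 0")
    case True
    let ?c = "t / (2 * \<sigma>)"
    have eq: "G S (t - 2 * x * \<sigma>) = indicator {..<?c} x - indicator {?c<..} x" for x
      using True s by (auto simp: G_def sgn_if indicator_def field_simps)
    have "(\<integral>x. G S (t - 2 * x * \<sigma>) \<partial>std_normal_distribution)
       = (\<integral>x. indicator {..<?c} x - indicator {?c<..} x \<partial>std_normal_distribution)"
      by (simp add: eq)
    also have "\<dots> = measure std_normal_distribution {..<?c} - measure std_normal_distribution {?c<..}"
      by (subst Bochner_Integration.integral_diff) (auto intro!: N.integrable_const_bound[where B=1])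
    also have "\<dots> = 2 * Phi ?c - 1" by (simp add: Phi_less Phi_greater)
    also have "\<dots> = G (S + \<sigma>^2) t" using True s by (simp add: G_def)
    finally show ?thesis .
  next
    case False
    then have S': "S > 0" using S by simp
    have "(\<integral>x. G S (t - 2 * x * \<sigma>) \<partial>std_normal_distribution)
       = (\<integral>x. 2 * Phi ((t - (2 * \<sigma>) * x) / (2 * sqrt S)) - 1 \<partial>std_normal_distribution)"
      using False by (simp add: G_def mult_ac)
    also have "\<dots> = 2 * (\<integral>x. Phi ((t - (2 * \<sigma>) * x) / (2 * sqrt S)) \<partial>std_normal_distribution) - 1"
      by (subst Bochner_Integration.integral_diff)
         (auto intro!: N.integrable_const_bound[where B=1] simp: Phi_nonneg Phi_le1 N_UNIV)
    also have "\<dots> = 2 * Phi (t / sqrt ((2 * sqrt S)^2 + (2 * \<sigma>)^2)) - 1"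
      using S' by (subst Phi_conv) auto
    also have "sqrt ((2 * sqrt S)^2 + (2 * \<sigma>)^2) = 2 * sqrt (S + \<sigma>^2)"
    proof -
      have "(2 * sqrt S)^2 + (2 * \<sigma>)^2 = 4 * (S + \<sigma>^2)" using S by (simp add: power_mult_distrib algebra_simps)
      moreover have "sqrt (4 * (S + \<sigma>^2)) = sqrt 4 * sqrt (S + \<sigma>^2)" by (rule real_sqrt_mult)
      moreover have "sqrt (4::real) = 2" by (rule real_sqrt_unique) auto
      ultimately show ?thesis by simp
    qed
    also have "2 * Phi (t / (2 * sqrt (S + \<sigma>^2))) - 1 = G (S + \<sigma>^2) t"
    proof -
      have "S + \<sigma>^2 \<noteq> 0" using S' zero_le_power2[of \<sigma>] by linarith
      then show ?thesis by (simp add: G_def)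
    qed
    finally show ?thesis .
  qed
qed

lemma reflection:
  fixes F :: "real \<Rightarrow> real"
  assumes s: "\<sigma> > 0" and [measurable]: "F \<in> borel_measurable borel"
    and Fb: "\<And>x. \<bar>F x\<bar> \<le> 1" and Fo: "\<And>x. F (-x) = - F x"
  shows "(\<integral>x. (1 - min 1 (exp (-((t/\<sigma>)^2)/2 + (t/\<sigma>) * x))) * F (t - 2 * x * \<sigma>) \<partial>std_normal_distribution)
       = (\<integral>x. F (t - 2 * x * \<sigma>) \<partial>std_normal_distribution)"
proof -
  interpret N: prob_space std_normal_distribution by (rule probN)
  define a where "a = t / \<sigma>"
  define h where "h x = min (std_normal_density x) (std_normal_density (x - a)) * F (t - 2 * x * \<sigma>)" for x
  have [measurable]: "h \<in> borel_measurable borel" unfolding h_def by measurable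
  have hs: "h (a + (-1) * x) = - h x" for x
  proof -
    have e1: "t - 2 * (a + (-1) * x) * \<sigma> = - (t - 2 * x * \<sigma>)"
      using s by (simp add: a_def field_simps)
    have e2: "std_normal_density (a + (-1) * x) = std_normal_density (x - a)"
      using phi_even[of "x - a"] by simp
    have e3: "std_normal_density (a + (-1) * x - a) = std_normal_density x"
      using phi_even[of x] by simp
    have "h (a + (-1) * x) = min (std_normal_density (x - a)) (std_normal_density x) * F (- (t - 2 * x * \<sigma>))"
      by (simp only: h_def e1 e2 e3)
    also have "\<dots> = - h x" by (simp only: Fo h_def min.commute mult_minus_right)
    finally show ?thesis .
  qed
  have "(\<integral>x. h x \<partial>lborel) = \<bar>-1\<bar> *\<^sub>R (\<integral>x. h (a + (-1) * x) \<partial>lborel)"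
    by (rule lborel_integral_real_affine) simp
  also have "(\<lambda>x. h (a + (-1) * x)) = (\<lambda>x. - h x)" by (rule ext) (rule hs)
  also have "\<bar>-1\<bar> *\<^sub>R (\<integral>x. - h x \<partial>lborel) = - (\<integral>x. h x \<partial>lborel)" by simp
  finally have h0: "(\<integral>x. h x \<partial>lborel) = 0" by simp
  have "(\<integral>x. min 1 (exp (-(a^2)/2 + a * x)) * F (t - 2 * x * \<sigma>) \<partial>std_normal_distribution)
      = (\<integral>x. std_normal_density x *\<^sub>R (min 1 (exp (-(a^2)/2 + a * x)) * F (t - 2 * x * \<sigma>)) \<partial>lborel)"
    by (rule integral_density) (auto simp: normal_density_nonneg)
  also have "\<dots> = (\<integral>x. h x \<partial>lborel)"
  proof (rule Bochner_Integration.integral_cong[OF refl])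
    fix x
    have "std_normal_density x * min 1 (exp (-(a^2)/2 + a * x)) = min (std_normal_density x * 1) (std_normal_density x * exp (-(a^2)/2 + a * x))"
      by (rule mult_min_right) (simp add: normal_density_nonneg)
    then have "std_normal_density x * min 1 (exp (-(a^2)/2 + a * x)) = min (std_normal_density x) (std_normal_density (x - a))"
      by (simp only: phi_shift mult_1_right)
    then show "std_normal_density x *\<^sub>R (min 1 (exp (-(a^2)/2 + a * x)) * F (t - 2 * x * \<sigma>)) = h x"
      by (simp add: h_def mult.assoc[symmetric])
  qed
  finally have J: "(\<integral>x. min 1 (exp (-(a^2)/2 + a * x)) * F (t - 2 * x * \<sigma>) \<partial>std_normal_distribution) = 0"
    using h0 by simp
  have int1: "integrable std_normal_distribution (\<lambda>x. F (t - 2 * x * \<sigma>))"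
    by (rule N.integrable_const_bound[where B=1]) (auto simp: Fb)
  have int2: "integrable std_normal_distribution (\<lambda>x. min 1 (exp (-(a^2)/2 + a * x)) * F (t - 2 * x * \<sigma>))"
    apply (rule N.integrable_const_bound[where B=1])
    using Fb by (auto simp: abs_mult intro!: mult_le_one)
  have "(\<integral>x. (1 - min 1 (exp (-(a^2)/2 + a * x))) * F (t - 2 * x * \<sigma>) \<partial>std_normal_distribution)
     = (\<integral>x. F (t - 2 * x * \<sigma>) - min 1 (exp (-(a^2)/2 + a * x)) * F (t - 2 * x * \<sigma>) \<partial>std_normal_distribution)"
    by (simp add: algebra_simps)
  also have "\<dots> = (\<integral>x. F (t - 2 * x * \<sigma>) \<partial>std_normal_distribution)"
    using int1 int2 J by (subst Bochner_Integration.integral_diff) auto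
  finally show ?thesis by (simp add: a_def)
qed


definition fdens :: "'a::euclidean_space \<Rightarrow> real" where
  "fdens x = (2 * pi) powr (- real DIM('a) / 2) * exp (- (norm x)\<^sup>2 / 2)"

lemma fdens_meas[measurable]: "fdens \<in> borel_measurable borel"
  unfolding fdens_def by measurable

lemma const_pow: "(1 / sqrt (2 * pi)) ^ n = (2 * pi) powr (- real n / 2)"
proof -
  have "(2 * pi) powr (real n / 2) = ((2 * pi) powr (1/2)) powr real n"
    by (simp add: powr_powr)
  also have "\<dots> = (sqrt (2 * pi)) ^ n" by (simp add: powr_half_sqrt powr_realpow)
  finally have "(2 * pi) powr (real n / 2) = (sqrt (2 * pi)) ^ n" .
  then have "(2 * pi) powr (- (real n / 2)) = inverse ((sqrt (2 * pi)) ^ n)"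
    by (simp add: powr_minus)
  then show ?thesis by (simp add: power_one_over inverse_eq_divide)
qed

lemma fdens_prod: "fdens (x::'a::euclidean_space) = (\<Prod>b\<in>Basis. std_normal_density (x \<bullet> b))"
proof -
  have n: "(norm x)\<^sup>2 = (\<Sum>b\<in>Basis. (x \<bullet> b)^2)"
  proof -
    have "(norm x)\<^sup>2 = x \<bullet> x" by (rule power2_norm_eq_inner)
    also have "\<dots> = (\<Sum>b\<in>Basis. (x \<bullet> b) * (x \<bullet> b))" by (rule euclidean_inner)
    finally show ?thesis by (simp add: power2_eq_square)
  qed
  have "exp (- (norm x)\<^sup>2 / 2) = exp (\<Sum>b\<in>Basis. - ((x \<bullet> b)^2) / 2)"
    by (simp add: n sum_divide_distrib sum_negf)
  also have "\<dots> = (\<Prod>b\<in>Basis. exp (- ((x \<bullet> b)^2) / 2))" by (simp add: exp_sum)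
  finally have e: "exp (- (norm x)\<^sup>2 / 2) = (\<Prod>b\<in>Basis. exp (- ((x \<bullet> b)^2) / 2))" .
  have "(\<Prod>b\<in>Basis. std_normal_density (x \<bullet> b)) = (\<Prod>b\<in>Basis. (1 / sqrt (2 * pi)) * exp (- ((x \<bullet> b)^2) / 2))"
    by (simp add: std_normal_density_def)
  also have "\<dots> = (1 / sqrt (2 * pi)) ^ DIM('a) * (\<Prod>b\<in>Basis. exp (- ((x \<bullet> b)^2) / 2))"
    by (simp only: prod.distrib prod_constant)
  also have "\<dots> = fdens x" by (simp only: fdens_def e const_pow)
  finally show ?thesis by simp
qed

lemma nn_integral_std_normal: "(\<integral>\<^sup>+x. ennreal (std_normal_density x) \<partial>lborel) = 1"
proof -
  interpret N: prob_space std_normal_distribution by (rule probN)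
  have "emeasure std_normal_distribution (space std_normal_distribution) = 1" by (rule N.emeasure_space_1)
  then show ?thesis by (simp add: emeasure_density)
qed

lemma prob_fdens: "prob_space (density lborel (\<lambda>x::'a::euclidean_space. ennreal (fdens x)))"
proof
  have "emeasure (density lborel (\<lambda>x::'a. ennreal (fdens x))) UNIV = (\<integral>\<^sup>+x. ennreal (fdens (x::'a)) \<partial>lborel)"
    by (subst emeasure_density) auto
  also have "\<dots> = (\<integral>\<^sup>+x. (\<Prod>b\<in>Basis. ennreal (std_normal_density ((x::'a) \<bullet> b))) \<partial>lborel)"
    by (simp add: fdens_prod prod_ennreal normal_density_nonneg)
  also have "\<dots> = (\<Prod>b\<in>(Basis::'a set). (\<integral>\<^sup>+x. ennreal (std_normal_density x) \<partial>lborel))"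
    by (rule nn_integral_lborel_prod) auto
  also have "\<dots> = 1" by (simp add: nn_integral_std_normal)
  finally show "emeasure (density lborel (\<lambda>x::'a. ennreal (fdens x))) (space (density lborel (\<lambda>x::'a. ennreal (fdens x)))) = 1"
    by simp
qed

lemma product_sigma_finite_lborel: "product_sigma_finite (\<lambda>_. lborel)"
  unfolding product_sigma_finite_def by (simp add: lborel.sigma_finite_measure_axioms)

lemma char_proj:
  fixes w :: "'a::euclidean_space"
  assumes w: "norm w = 1"
  shows "char (distr (density lborel (\<lambda>x::'a. ennreal (fdens x))) borel (\<lambda>x. w \<bullet> x)) s
     = complex_of_real (exp (- (s^2) / 2))"
proof -
  define g where "g b y = complex_of_real (std_normal_density y) * iexp (s * (w \<bullet> b) * y)" for b :: 'a and y
  have gm[measurable]: "g b \<in> borel_measurable borel" for b unfolding g_def by measurable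
  have gint: "integrable lborel (g b)" for b
  proof -
    interpret N: prob_space std_normal_distribution by (rule probN)
    have "integrable std_normal_distribution (\<lambda>y. iexp (s * (w \<bullet> b) * y))"
      by (rule N.integrable_const_bound[where B=1]) (auto simp: norm_exp_i_times)
    then have "integrable lborel (\<lambda>y. std_normal_density y *\<^sub>R iexp (s * (w \<bullet> b) * y))"
      by (subst (asm) integrable_density) (auto simp: normal_density_nonneg)
    then show ?thesis unfolding g_def scaleR_conv_of_real .
  qed
  have gchar: "integral\<^sup>L lborel (g b) = complex_of_real (exp (- ((s * (w \<bullet> b))^2) / 2))" for b
  proof -
    have "integral\<^sup>L lborel (g b) = integral\<^sup>L lborel (\<lambda>y. std_normal_density y *\<^sub>R iexp ((s * (w \<bullet> b)) * y))"
      unfolding g_def by (simp add: scaleR_conv_of_real)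
    also have "\<dots> = integral\<^sup>L std_normal_distribution (\<lambda>y. iexp ((s * (w \<bullet> b)) * y))"
      by (rule integral_density[symmetric]) (auto simp: normal_density_nonneg)
    also have "\<dots> = char std_normal_distribution (s * (w \<bullet> b))" by (simp add: char_def)
    finally show ?thesis by (simp add: char_std_normal_distribution)
  qed
  have pt: "fdens (\<Sum>b\<in>Basis. f b *\<^sub>R b) *\<^sub>R iexp (s * (w \<bullet> (\<Sum>b\<in>Basis. f b *\<^sub>R b)))
      = (\<Prod>b\<in>Basis. g b (f b))" for f :: "'a \<Rightarrow> real"
  proof -
    have ib: "(\<Sum>b'\<in>Basis. f b' *\<^sub>R b') \<bullet> b = f b" if "b \<in> Basis" for b
      using that by (simp add: inner_sum_left inner_Basis if_distrib sum.delta cong: if_cong)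
    have "fdens (\<Sum>b\<in>Basis. f b *\<^sub>R b) = (\<Prod>b\<in>Basis. std_normal_density (f b))"
      by (simp add: fdens_prod ib)
    moreover have "iexp (s * (w \<bullet> (\<Sum>b\<in>Basis. f b *\<^sub>R b))) = (\<Prod>b\<in>Basis. iexp (s * (w \<bullet> b) * f b))"
    proof -
      have "s * (w \<bullet> (\<Sum>b\<in>Basis. f b *\<^sub>R b)) = (\<Sum>b\<in>Basis. s * (w \<bullet> b) * f b)"
        by (simp add: inner_sum_right sum_distrib_left mult_ac)
      then have "iexp (s * (w \<bullet> (\<Sum>b\<in>Basis. f b *\<^sub>R b))) = exp (\<Sum>b\<in>Basis. \<i> * complex_of_real (s * (w \<bullet> b) * f b))"
        by (simp add: sum_distrib_left)
      also have "\<dots> = (\<Prod>b\<in>Basis. iexp (s * (w \<bullet> b) * f b))" by (simp add: exp_sum)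
      finally show ?thesis .
    qed
    ultimately show ?thesis
      by (simp add: g_def scaleR_conv_of_real prod.distrib)
  qed
  interpret PS: product_sigma_finite "\<lambda>_. lborel :: real measure" by (rule product_sigma_finite_lborel)
  have "char (distr (density lborel (\<lambda>x::'a. ennreal (fdens x))) borel (\<lambda>x. w \<bullet> x)) s
      = (\<integral>x. iexp (s * (w \<bullet> x)) \<partial>density lborel (\<lambda>x::'a. ennreal (fdens x)))"
    unfolding char_def by (subst integral_distr) auto
  also have "\<dots> = (\<integral>x. fdens x *\<^sub>R iexp (s * (w \<bullet> x)) \<partial>(lborel::'a measure))"
    by (subst integral_density) (auto simp: fdens_def)
  also have "\<dots> = (\<integral>f. fdens (\<Sum>b\<in>Basis. f b *\<^sub>R b) *\<^sub>R iexp (s * (w \<bullet> (\<Sum>b\<in>Basis. f b *\<^sub>R b))) \<partial>(\<Pi>\<^sub>M b\<in>(Basis::'a set). lborel))"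
    by (subst lborel_eq) (subst integral_distr, auto)
  also have "\<dots> = (\<integral>f. (\<Prod>b\<in>Basis. g b (f b)) \<partial>(\<Pi>\<^sub>M b\<in>(Basis::'a set). lborel))"
    by (simp only: pt)
  also have "\<dots> = (\<Prod>b\<in>Basis. integral\<^sup>L lborel (g b))"
    by (rule PS.product_integral_prod) (auto intro: gint)
  also have "\<dots> = (\<Prod>b\<in>Basis. complex_of_real (exp (- ((s * (w \<bullet> b))^2) / 2)))"
    by (simp add: gchar)
  also have "\<dots> = complex_of_real (exp (\<Sum>b\<in>Basis. - ((s * (w \<bullet> b))^2) / 2))"
    by (simp add: exp_sum)
  also have "(\<Sum>b\<in>(Basis::'a set). - ((s * (w \<bullet> b))^2) / 2) = - (s^2 * (\<Sum>b\<in>Basis. (w \<bullet> b)^2)) / 2"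
    by (simp add: power_mult_distrib sum_divide_distrib sum_negf sum_distrib_left)
  also have "(\<Sum>b\<in>(Basis::'a set). (w \<bullet> b)^2) = 1"
  proof -
    have "(norm w)\<^sup>2 = w \<bullet> w" by (rule power2_norm_eq_inner)
    also have "\<dots> = (\<Sum>b\<in>Basis. (w \<bullet> b) * (w \<bullet> b))" by (rule euclidean_inner)
    finally show ?thesis using w by (simp add: power2_eq_square)
  qed
  finally show ?thesis by simp
qed

lemma distr_proj:
  fixes w :: "'a::euclidean_space"
  assumes w: "norm w = 1"
  shows "distr (density lborel (\<lambda>x::'a. ennreal (fdens x))) borel (\<lambda>x. w \<bullet> x) = std_normal_distribution"
proof (rule Levy_uniqueness)
  interpret D: prob_space "density lborel (\<lambda>x::'a. ennreal (fdens x))" by (rule prob_fdens)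
  show "real_distribution (distr (density lborel (\<lambda>x::'a. ennreal (fdens x))) borel (\<lambda>x. w \<bullet> x))"
    by (rule D.real_distribution_distr) simp
  show "real_distribution std_normal_distribution" by (rule real_dist_normal_dist)
  show "char (distr (density lborel (\<lambda>x::'a. ennreal (fdens x))) borel (\<lambda>x. w \<bullet> x)) = char std_normal_distribution"
    by (rule ext) (simp add: char_proj[OF w] char_std_normal_distribution)
qed

lemma std_normal_vec_eq: "std_normal_vec = density lborel (\<lambda>x::real^'d. ennreal (fdens x))"
  by (simp add: std_normal_vec_def fdens_def)

lemma prob_std_normal_vec: "prob_space (std_normal_vec :: (real^'d) measure)"
  unfolding std_normal_vec_eq by (rule prob_fdens)

lemma distr_proj_vec:
  fixes w :: "real^'d"
  assumes w: "norm w = 1"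
  shows "distr std_normal_vec borel (\<lambda>x. w \<bullet> x) = std_normal_distribution"
  unfolding std_normal_vec_eq by (rule distr_proj[OF w])


lemma matrix_inv_props:
  fixes A :: "real^'n^'n"
  assumes "invertible A"
  shows "A ** matrix_inv A = mat 1" "matrix_inv A ** A = mat 1"
proof -
  have "\<exists>A'::real^'n^'n. A ** A' = mat 1 \<and> A' ** A = mat 1" using assms by (simp add: invertible_def)
  then have "A ** matrix_inv A = mat 1 \<and> matrix_inv A ** A = mat 1"
    unfolding matrix_inv_def by (rule someI_ex)
  then show "A ** matrix_inv A = mat 1" "matrix_inv A ** A = mat 1" by auto
qed

lemma inv_cancel: "invertible (A::real^'n^'n) \<Longrightarrow> A *v (matrix_inv A *v x) = x"
  by (simp add: matrix_vector_mul_assoc matrix_inv_props)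

lemma invertible_nonzero: "invertible (A::real^'n^'n) \<Longrightarrow> x \<noteq> 0 \<Longrightarrow> A *v x \<noteq> 0"
  by (metis matrix_inv_props(2) matrix_vector_mul_assoc matrix_vector_mul_lid matrix_vector_mult_0_right)

lemma prodA_invertible:
  assumes "\<And>k. k \<ge> 1 \<Longrightarrow> invertible (A k)"
  shows "invertible (prodA A k)"
proof (induction k)
  case 0 then show ?case by (simp add: invertible_def)
next
  case (Suc k) then show ?case using assms[of "Suc k"] by (simp add: invertible_mult)
qed

lemma rank1_mult: "(\<chi> i j. e $ i * e $ j) *v x = (e \<bullet> x) *\<^sub>R (e :: real^'n)"
  by (simp add: vec_eq_iff matrix_vector_mult_def inner_vec_def sum_distrib_left mult_ac)

lemma reflect_mult: "(mat 1 - 2 *\<^sub>R (\<chi> i j. e $ i * e $ j)) *v x = x - (2 * (e \<bullet> x)) *\<^sub>R (e :: real^'n)"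
  by (simp add: matrix_vector_mult_diff_rdistrib matrix_vector_mul_lid
       scaleR_matrix_vector_assoc[symmetric] rank1_mult)

definition stepf :: "real \<Rightarrow> real \<Rightarrow> real \<times> real \<Rightarrow> real" where
  "stepf \<sigma> t y = (if t = 0 \<or> snd y \<le> exp (- ((t / \<sigma>)^2) / 2 + (t / \<sigma>) * fst y) then 0 else t - 2 * fst y * \<sigma>)"

fun run :: "(nat \<Rightarrow> real) \<Rightarrow> nat \<Rightarrow> nat \<Rightarrow> real \<Rightarrow> (nat \<Rightarrow> real \<times> real) \<Rightarrow> real" where
  "run \<sigma> j 0 t y = t"
| "run \<sigma> j (Suc m) t y = run \<sigma> (Suc j) m (stepf (\<sigma> (Suc j)) t (y (Suc j))) y"

lemma run_Suc': "run \<sigma> j (Suc m) t y = stepf (\<sigma> (Suc (j + m))) (run \<sigma> j m t y) (y (Suc (j + m)))"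
  by (induction m arbitrary: j t) auto

lemma run_zero: "run \<sigma> j m 0 y = 0"
  by (induction m arbitrary: j) (auto simp: stepf_def)

lemma run_cong: "(\<And>i. i > j \<Longrightarrow> y i = y' i) \<Longrightarrow> run \<sigma> j m t y = run \<sigma> j m t y'"
proof (induction m arbitrary: j t)
  case 0 then show ?case by simp
next
  case (Suc m)
  have "run \<sigma> (Suc j) m (stepf (\<sigma> (Suc j)) t (y (Suc j))) y = run \<sigma> (Suc j) m (stepf (\<sigma> (Suc j)) t (y (Suc j))) y'"
    by (rule Suc.IH) (use Suc.prems in auto)
  then show ?case using Suc.prems[of "Suc j"] by simp
qed


lemma stepf_eq: "stepf \<sigma> t (a, b) = (if t = 0 \<or> b \<le> exp (- ((t / \<sigma>)^2) / 2 + (t / \<sigma>) * a) then 0 else t - 2 * a * \<sigma>)"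
  by (simp add: stepf_def)

lemma coupling_diff:
  fixes A B :: "nat \<Rightarrow> real^'d^'d" and z zt :: "real^'d" and xi :: "nat \<Rightarrow> real^'d" and u :: "nat \<Rightarrow> real"
  assumes invA: "\<And>k. k \<ge> 1 \<Longrightarrow> invertible (A k)"
    and invB: "\<And>k. k \<ge> 1 \<Longrightarrow> invertible (B k)"
    and dz: "zt - z \<noteq> 0"
  defines "v \<equiv> \<lambda>k. matrix_inv (B k) *v (prodA A k *v (zt - z))"
  shows "snd (coupling A B z zt xi u k) - fst (coupling A B z zt xi u k)
     = run (\<lambda>k. 1 / norm (v k)) 0 k 1 (\<lambda>k. ((1 / norm (v k)) *\<^sub>R v k \<bullet> xi k, u k)) *\<^sub>R (prodA A k *v (zt - z))"
proof (induction k)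
  case 0 then show ?case by simp
next
  case (Suc k)
  let ?\<sigma> = "\<lambda>k. 1 / norm (v k)"
  let ?y = "\<lambda>k. ((1 / norm (v k)) *\<^sub>R v k \<bullet> xi k, u k)"
  define T where "T = run ?\<sigma> 0 k 1 ?y"
  obtain Zp Ztp where C: "coupling A B z zt xi u k = (Zp, Ztp)" by fastforce
  have D: "Ztp - Zp = T *\<^sub>R (prodA A k *v (zt - z))" using Suc.IH by (simp add: C T_def)
  define V where "V = v (Suc k)"
  define P where "P = prodA A (Suc k) *v (zt - z)"
  have P: "P \<noteq> 0" unfolding P_def by (rule invertible_nonzero[OF prodA_invertible[OF invA] dz])
  have BV: "B (Suc k) *v V = P" unfolding V_def v_def P_def by (rule inv_cancel[OF invB]) simp
  have V0: "V \<noteq> 0" using BV P by auto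
  have nV: "norm V > 0" using V0 by simp
  have AD: "A (Suc k) *v (Ztp - Zp) = T *\<^sub>R P"
    by (simp add: D P_def matrix_vector_mult_scaleR matrix_vector_mul_assoc)
  define E where "E = matrix_inv (B (Suc k)) *v (A (Suc k) *v (Ztp - Zp))"
  have E: "E = T *\<^sub>R V" by (simp add: E_def AD V_def v_def P_def matrix_vector_mult_scaleR)
  define e where "e = (if E = 0 then 0 else (1 / norm E) *\<^sub>R E)"
  define p where "p = (\<lambda>w. exp (- (norm E)\<^sup>2 / 2 + E \<bullet> w))"
  define x where "x = xi (Suc k)"
  define xt where "xt = (if u (Suc k) \<le> p x then x - E else (mat 1 - 2 *\<^sub>R (\<chi> i j. e $ i * e $ j)) *v x)"
  have cS: "coupling A B z zt xi u (Suc k) = (A (Suc k) *v Zp + B (Suc k) *v x, A (Suc k) *v Ztp + B (Suc k) *v xt)"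
    unfolding xt_def p_def e_def x_def E_def by (simp only: coupling.simps(2) C Let_def prod.case)
  have new: "snd (coupling A B z zt xi u (Suc k)) - fst (coupling A B z zt xi u (Suc k)) = T *\<^sub>R P + B (Suc k) *v (xt - x)"
  proof -
    have "snd (coupling A B z zt xi u (Suc k)) - fst (coupling A B z zt xi u (Suc k))
        = (A (Suc k) *v Ztp + B (Suc k) *v xt) - (A (Suc k) *v Zp + B (Suc k) *v x)" by (simp only: cS fst_conv snd_conv)
    also have "\<dots> = A (Suc k) *v (Ztp - Zp) + B (Suc k) *v (xt - x)"
      by (simp add: matrix_vector_mult_diff_distrib algebra_simps)
    finally show ?thesis by (simp only: AD)
  qed
  have runS: "run ?\<sigma> 0 (Suc k) 1 ?y = stepf (1 / norm V) T ((1 / norm V) *\<^sub>R V \<bullet> x, u (Suc k))"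
    by (subst run_Suc') (simp add: T_def V_def x_def)
  show ?case
  proof (cases "T = 0")
    case True
    then have "E = 0" by (simp add: E)
    then have "xt = x" unfolding xt_def reflect_mult by (simp add: e_def)
    then show ?thesis unfolding new runS P_def[symmetric] using True by (simp add: stepf_def)
  next
    case False
    have nE: "norm E = \<bar>T\<bar> * norm V" by (simp add: E)
    have pe: "p x = exp (- ((T / (1 / norm V))^2) / 2 + (T / (1 / norm V)) * ((1 / norm V) *\<^sub>R V \<bullet> x))"
      using nV by (simp add: p_def nE E power_mult_distrib inner_scaleR_left)
    have st: "stepf (1 / norm V) T ((1 / norm V) *\<^sub>R V \<bullet> x, u (Suc k))
       = (if u (Suc k) \<le> p x then 0 else T - 2 * ((1 / norm V) *\<^sub>R V \<bullet> x) * (1 / norm V))"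
      unfolding stepf_eq pe[symmetric] using False by simp
    show ?thesis
    proof (cases "u (Suc k) \<le> p x")
      case True
      then have "xt - x = - E" by (simp add: xt_def)
      then have "B (Suc k) *v (xt - x) = - (T *\<^sub>R P)"
        by (simp add: E matrix_vector_mult_scaleR BV[symmetric] vec.neg)
      then show ?thesis unfolding new runS P_def[symmetric] st using True by simp
    next
      case u: False
      have E0: "E \<noteq> 0" using False V0 by (simp add: E)
      have ex: "(2 * (e \<bullet> x)) *\<^sub>R e = (2 * (V \<bullet> x) / (norm V)^2) *\<^sub>R V"
        using E0 False nV by (simp add: e_def nE E inner_scaleR_left power2_eq_square field_simps)
      have "xt - x = - ((2 * (V \<bullet> x) / (norm V)^2) *\<^sub>R V)"
        using u by (simp add: xt_def reflect_mult ex)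
      then have "B (Suc k) *v (xt - x) = - ((2 * (V \<bullet> x) / (norm V)^2) *\<^sub>R P)"
        by (simp add: matrix_vector_mult_scaleR BV[symmetric] vec.neg)
      moreover have "T - 2 * ((1 / norm V) *\<^sub>R V \<bullet> x) * (1 / norm V) = T - 2 * (V \<bullet> x) / (norm V)^2"
        by (simp add: inner_scaleR_left power2_eq_square)
      ultimately show ?thesis unfolding new runS P_def[symmetric] st using u
        by (simp add: algebra_simps power2_eq_square)
    qed
  qed
qed


lemma sets_N[measurable_cong]: "sets std_normal_distribution = sets borel" by simp
lemma sets_U[measurable_cong]: "sets unif01 = sets borel" by (simp add: unif01_def)
lemma space_U: "space unif01 = UNIV" by (simp add: unif01_def)

lemma prob_U: "prob_space unif01"
  unfolding unif01_def by (rule prob_space_uniform_measure) auto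

definition MM :: "(real \<times> real) measure" where
  "MM = std_normal_distribution \<Otimes>\<^sub>M unif01"

lemma pair_MM: "pair_prob_space std_normal_distribution unif01"
  by (intro pair_prob_space.intro pair_sigma_finite.intro probN prob_U prob_space_imp_sigma_finite)

lemma prob_MM: "prob_space MM"
proof -
  interpret P: pair_prob_space std_normal_distribution unif01 by (rule pair_MM)
  show ?thesis unfolding MM_def by (rule P.prob_space_axioms)
qed

lemma sets_MM[measurable_cong]: "sets MM = sets (borel \<Otimes>\<^sub>M borel)"
  unfolding MM_def by (rule sets_pair_measure_cong) (simp_all add: unif01_def)

lemma stepf_meas[measurable]: "(\<lambda>p. stepf c (fst p) (snd p)) \<in> borel_measurable (borel \<Otimes>\<^sub>M MM)"
  unfolding stepf_def by measurable

lemma run_meas: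
  assumes "{Suc j..} \<subseteq> K"
  shows "(\<lambda>p. run \<sigma> j m (fst p) (snd p)) \<in> borel_measurable (borel \<Otimes>\<^sub>M PiM K (\<lambda>_. MM))"
  using assms
proof (induction m arbitrary: j)
  case 0 then show ?case by simp
next
  case (Suc m)
  have K: "Suc j \<in> K" using Suc.prems by auto
  have IH: "(\<lambda>p. run \<sigma> (Suc j) m (fst p) (snd p)) \<in> borel_measurable (borel \<Otimes>\<^sub>M PiM K (\<lambda>_. MM))"
    by (rule Suc.IH) (use Suc.prems in auto)
  have g: "(\<lambda>p. (stepf (\<sigma> (Suc j)) (fst p) (snd p (Suc j)), snd p)) \<in> measurable (borel \<Otimes>\<^sub>M PiM K (\<lambda>_. MM)) (borel \<Otimes>\<^sub>M PiM K (\<lambda>_. MM))"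
  proof (rule measurable_Pair)
    have c: "(\<lambda>p. (fst p, snd p (Suc j))) \<in> measurable (borel \<Otimes>\<^sub>M PiM K (\<lambda>_. MM)) (borel \<Otimes>\<^sub>M MM)"
      using K by measurable
    show "(\<lambda>p. stepf (\<sigma> (Suc j)) (fst p) (snd p (Suc j))) \<in> borel_measurable (borel \<Otimes>\<^sub>M PiM K (\<lambda>_. MM))"
      using measurable_comp[OF c stepf_meas[of "\<sigma> (Suc j)"]] by (simp add: comp_def)
  qed simp
  show ?case using measurable_comp[OF g IH] by (simp add: comp_def)
qed

lemma inner_U:
  assumes p: "p > 0"
  shows "(\<integral>u. (if u \<le> p then 0 else c) \<partial>unif01) = (1 - min 1 p) * c"
proof -
  interpret U: prob_space unif01 by (rule prob_U)
  have "(\<integral>u. (if u \<le> p then 0 else c) \<partial>unif01) = (\<integral>u. c * indicator {p<..} u \<partial>unif01)"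
    by (rule Bochner_Integration.integral_cong) (auto simp: indicator_def)
  also have "\<dots> = c * measure unif01 {p<..}" by simp
  also have "measure unif01 {p<..} = measure lborel ({0<..<1} \<inter> {p<..})"
    unfolding unif01_def by (subst measure_uniform_measure) auto
  also have "\<dots> = 1 - min 1 p"
  proof (cases "p < 1")
    case True
    then have "{0<..<1} \<inter> {p<..} = {p<..<(1::real)}" using p by auto
    then show ?thesis using True by simp
  next
    case False
    then have "{0<..<1} \<inter> {p<..} = ({}::real set)" by auto
    then show ?thesis using False by simp
  qed
  finally show ?thesis by simp
qed


lemma prob_recursion:
  fixes M :: "'w measure" and Y :: "nat \<Rightarrow> 'w \<Rightarrow> real \<times> real" and \<sigma> :: "nat \<Rightarrow> real"
  assumes M: "prob_space M"
    and ind: "prob_space.indep_vars M (\<lambda>_. MM) Y {1..}"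
    and dist: "\<And>k. k \<ge> 1 \<Longrightarrow> distr M MM (Y k) = MM"
    and sig: "\<And>k. k \<ge> 1 \<Longrightarrow> \<sigma> k > 0"
  shows "\<forall>j t. t > 0 \<longrightarrow> measure M {\<omega> \<in> space M. run \<sigma> j m t (\<lambda>k. Y k \<omega>) \<noteq> 0}
            = G (\<Sum>k\<in>{Suc j..j+m}. (\<sigma> k)^2) t"
proof (induction m)
  interpret Mp: prob_space M by (rule M)
  case 0
  show ?case using Mp.prob_space by (auto simp: G_pos)
next
  interpret Mp: prob_space M by (rule M)
  interpret N: prob_space std_normal_distribution by (rule probN)
  interpret U: prob_space unif01 by (rule prob_U)
  interpret NU: pair_prob_space std_normal_distribution unif01 by (rule pair_MM)
  case (Suc m)
  show ?case
  proof (intro allI impI)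
    fix j :: nat and t :: real
    assume t: "t > 0"
    define K where "K = {Suc (Suc j)..}"
    define S' where "S' = (\<Sum>k\<in>{Suc (Suc j)..Suc j+m}. (\<sigma> k)^2)"
    define s1 where "s1 = \<sigma> (Suc j)"
    have s1: "s1 > 0" unfolding s1_def by (rule sig) simp
    have S': "S' \<ge> 0" unfolding S'_def by (intro sum_nonneg) simp
    define W where "W = (\<lambda>\<omega>. restrict (\<lambda>i. Y i \<omega>) K)"
    define R1 where "R1 = (\<lambda>\<omega>. restrict (\<lambda>i. Y i \<omega>) {Suc j})"
    let ?Q = "PiM {Suc j} (\<lambda>_. MM)"
    define h where "h = (\<lambda>p::(nat \<Rightarrow> real \<times> real) \<times> (nat \<Rightarrow> real \<times> real). run \<sigma> (Suc j) m (stepf s1 t (fst p (Suc j))) (snd p))"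
    let ?P = "PiM K (\<lambda>_. MM)"
    have rv: "Y i \<in> measurable M MM" if "i \<ge> 1" for i
      using ind that unfolding prob_space.indep_vars_def[OF M] by auto
    have Y1m[measurable]: "Y (Suc j) \<in> measurable M MM" by (rule rv) simp
    have R1m[measurable]: "R1 \<in> measurable M ?Q"
      unfolding R1_def by (rule measurable_restrict) (auto intro: rv)
    have Wm[measurable]: "W \<in> measurable M ?P"
      unfolding W_def K_def by (rule measurable_restrict) (auto intro: rv)
    have hm[measurable]: "h \<in> borel_measurable (?Q \<Otimes>\<^sub>M ?P)"
    proof -
      have c: "(\<lambda>p::(nat \<Rightarrow> real \<times> real) \<times> (nat \<Rightarrow> real \<times> real). (stepf s1 t (fst p (Suc j)), snd p)) \<in> measurable (?Q \<Otimes>\<^sub>M ?P) (borel \<Otimes>\<^sub>M ?P)"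
      proof (rule measurable_Pair)
        have c1: "(\<lambda>p::(nat \<Rightarrow> real \<times> real) \<times> (nat \<Rightarrow> real \<times> real). (t, fst p (Suc j))) \<in> measurable (?Q \<Otimes>\<^sub>M ?P) (borel \<Otimes>\<^sub>M MM)"
          by measurable
        show "(\<lambda>p. stepf s1 t (fst p (Suc j))) \<in> borel_measurable (?Q \<Otimes>\<^sub>M ?P)"
          using measurable_comp[OF c1 stepf_meas[of s1]] by (simp add: comp_def)
      qed simp
      have r: "(\<lambda>p. run \<sigma> (Suc j) m (fst p) (snd p)) \<in> borel_measurable (borel \<Otimes>\<^sub>M ?P)"
        by (rule run_meas) (auto simp: K_def)
      show ?thesis using measurable_comp[OF c r] by (simp add: comp_def h_def)
    qed
    define H where "H = {p \<in> space (?Q \<Otimes>\<^sub>M ?P). h p \<noteq> 0}"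
    have Hm[measurable]: "H \<in> sets (?Q \<Otimes>\<^sub>M ?P)" unfolding H_def by measurable
    have indep: "prob_space.indep_var M ?Q R1 ?P W"
      unfolding W_def R1_def by (rule prob_space.indep_var_restrict[OF M ind]) (auto simp: K_def)
    have dR1: "distr M ?Q R1 = ?Q"
    proof -
      have "distr M ?Q R1 = distr (distr M MM (Y (Suc j))) ?Q (\<lambda>x. \<lambda>k\<in>{Suc j}. x)"
      proof -
        have "R1 = (\<lambda>\<omega>. \<lambda>k\<in>{Suc j}. Y (Suc j) \<omega>)" by (auto simp: R1_def fun_eq_iff restrict_def)
        then show ?thesis by (subst distr_distr) (auto simp: comp_def)
      qed
      also have "\<dots> = distr MM ?Q (\<lambda>x. \<lambda>k\<in>{Suc j}. x)" by (simp add: dist)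
      also have "\<dots> = ?Q"
      proof -
        have "product_sigma_finite (\<lambda>_::nat. MM)"
          by (simp add: product_sigma_finite_def prob_space_imp_sigma_finite prob_MM)
        then show ?thesis by (rule product_sigma_finite.distr_component)
      qed
      finally show ?thesis .
    qed
    define DW where "DW = distr M ?P W"
    interpret DW: prob_space DW unfolding DW_def by (rule Mp.prob_space_distr) simp
    interpret Qp: prob_space ?Q by (intro prob_space_PiM prob_MM)
    interpret PP: pair_prob_space ?Q DW
      by (intro pair_prob_space.intro pair_sigma_finite.intro prob_space_imp_sigma_finite DW.prob_space_axioms Qp.prob_space_axioms)
    have joint: "distr M (?Q \<Otimes>\<^sub>M ?P) (\<lambda>\<omega>. (R1 \<omega>, W \<omega>)) = ?Q \<Otimes>\<^sub>M DW"
      using indep unfolding prob_space.indep_var_distribution_eq[OF M] DW_def by (simp add: dR1)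
    have sDW: "sets (?Q \<Otimes>\<^sub>M DW) = sets (?Q \<Otimes>\<^sub>M ?P)" unfolding DW_def by (intro sets_pair_measure_cong) auto
    have HD: "H \<in> sets (?Q \<Otimes>\<^sub>M DW)" using Hm sDW by simp
    have "measure M {\<omega> \<in> space M. run \<sigma> j (Suc m) t (\<lambda>k. Y k \<omega>) \<noteq> 0} = measure M ((\<lambda>\<omega>. (R1 \<omega>, W \<omega>)) -` H \<inter> space M)"
    proof -
      have "run \<sigma> j (Suc m) t (\<lambda>k. Y k \<omega>) = h (R1 \<omega>, W \<omega>)" for \<omega>
      proof -
        have "run \<sigma> j (Suc m) t (\<lambda>k. Y k \<omega>) = run \<sigma> (Suc j) m (stepf s1 t (Y (Suc j) \<omega>)) (\<lambda>k. Y k \<omega>)"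
          by (simp add: s1_def)
        also have "\<dots> = run \<sigma> (Suc j) m (stepf s1 t (Y (Suc j) \<omega>)) (W \<omega>)"
          by (rule run_cong) (simp add: W_def K_def)
        also have "\<dots> = h (R1 \<omega>, W \<omega>)" by (simp add: h_def R1_def)
        finally show ?thesis .
      qed
      moreover have "(R1 \<omega>, W \<omega>) \<in> space (?Q \<Otimes>\<^sub>M ?P)" if "\<omega> \<in> space M" for \<omega>
        using that measurable_space[OF R1m] measurable_space[OF Wm] by (simp add: space_pair_measure)
      ultimately show ?thesis unfolding H_def by (intro arg_cong[where f="measure M"]) auto
    qed
    also have "\<dots> = measure (?Q \<Otimes>\<^sub>M DW) H"
      by (subst joint[symmetric], subst measure_distr) auto
    also have "\<dots> = (\<integral>p. indicator H p \<partial>(?Q \<Otimes>\<^sub>M DW))"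
      using HD by (simp add: sets.Int_space_eq2)
    also have "\<dots> = (\<integral>f. (\<integral>w. indicator H (f, w) \<partial>DW) \<partial>?Q)"
      by (rule PP.integral_fst'[symmetric], rule PP.P.integrable_const_bound[where B=1])
         (auto simp: borel_measurable_indicator[OF HD])
    finally have step1: "measure M {\<omega> \<in> space M. run \<sigma> j (Suc m) t (\<lambda>k. Y k \<omega>) \<noteq> 0} = (\<integral>f. (\<integral>w. indicator H (f, w) \<partial>DW) \<partial>?Q)" .
    define Fn where "Fn f = (\<integral>w. (indicator H (f, w) :: real) \<partial>DW)" for f
    have intFn: "integrable ?Q Fn"
    proof -
      have "integrable (?Q \<Otimes>\<^sub>M DW) (indicator H :: _ \<Rightarrow> real)"
        by (rule PP.P.integrable_const_bound[where B=1]) (auto simp: borel_measurable_indicator[OF HD])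
      from PP.integrable_fst'[OF this] show ?thesis unfolding Fn_def by simp
    qed
    then have Fnm[measurable]: "Fn \<in> borel_measurable ?Q" by auto
    define Gm where "Gm a = measure M {\<omega> \<in> space M. run \<sigma> (Suc j) m (stepf s1 t a) (\<lambda>k. Y k \<omega>) \<noteq> 0}" for a
    have FnG: "Fn f = Gm (f (Suc j))" if f: "f \<in> space ?Q" for f
    proof -
      have Hf: "{w \<in> space ?P. h (f, w) \<noteq> 0} \<in> sets ?P"
      proof -
        have "(\<lambda>w. (f, w)) \<in> measurable ?P (?Q \<Otimes>\<^sub>M ?P)"
          using f by (intro measurable_Pair) auto
        then have "(\<lambda>w. h (f, w)) \<in> borel_measurable ?P" using measurable_comp[OF _ hm] by (simp add: comp_def)
        then show ?thesis by measurable
      qed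
      have "(\<lambda>w. indicator H (f, w) :: real) = indicator {w \<in> space ?P. h (f, w) \<noteq> 0}"
        using f by (auto simp: H_def indicator_def space_pair_measure fun_eq_iff)
      then have "Fn f = measure DW {w \<in> space ?P. h (f, w) \<noteq> 0}"
        using Hf by (simp add: Fn_def DW_def)
      also have "\<dots> = measure M (W -` {w \<in> space ?P. h (f, w) \<noteq> 0} \<inter> space M)"
        unfolding DW_def using Hf by (subst measure_distr) auto
      also have "W -` {w \<in> space ?P. h (f, w) \<noteq> 0} \<inter> space M = {\<omega> \<in> space M. run \<sigma> (Suc j) m (stepf s1 t (f (Suc j))) (\<lambda>k. Y k \<omega>) \<noteq> 0}"
      proof -
        have "h (f, W \<omega>) = run \<sigma> (Suc j) m (stepf s1 t (f (Suc j))) (\<lambda>k. Y k \<omega>)" for \<omega>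
          unfolding h_def by (simp, rule run_cong) (simp add: W_def K_def)
        then show ?thesis using measurable_space[OF Wm] by auto
      qed
      finally show ?thesis by (simp add: Gm_def)
    qed
    have "(\<integral>f. Fn f \<partial>?Q) = (\<integral>a. Fn (\<lambda>k\<in>{Suc j}. a) \<partial>MM)"
    proof -
      have "product_sigma_finite (\<lambda>_::nat. MM)"
        by (simp add: product_sigma_finite_def prob_space_imp_sigma_finite prob_MM)
      then have "?Q = distr MM ?Q (\<lambda>x. \<lambda>k\<in>{Suc j}. x)" by (rule product_sigma_finite.distr_component[symmetric])
      then have "(\<integral>f. Fn f \<partial>?Q) = (\<integral>f. Fn f \<partial>distr MM ?Q (\<lambda>x. \<lambda>k\<in>{Suc j}. x))" by simp
      also have "\<dots> = (\<integral>a. Fn (\<lambda>k\<in>{Suc j}. a) \<partial>MM)"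
        by (rule integral_distr) auto
      finally show ?thesis .
    qed
    also have "\<dots> = (\<integral>a. Gm a \<partial>MM)"
    proof (rule Bochner_Integration.integral_cong[OF refl])
      fix a assume "a \<in> space MM"
      then have "(\<lambda>k\<in>{Suc j}. a) \<in> space ?Q" by (auto simp: space_PiM)
      then show "Fn (\<lambda>k\<in>{Suc j}. a) = Gm a" by (simp add: FnG)
    qed
    finally have step2: "(\<integral>f. Fn f \<partial>?Q) = (\<integral>a. Gm a \<partial>MM)" .
    have Gmm[measurable]: "Gm \<in> borel_measurable MM"
    proof -
      have "(\<lambda>a. Fn (\<lambda>k\<in>{Suc j}. a)) \<in> borel_measurable MM" by measurable
      moreover have "a \<in> space MM \<Longrightarrow> Fn (\<lambda>k\<in>{Suc j}. a) = Gm a" for a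
        by (subst FnG) (auto simp: space_PiM)
      ultimately show ?thesis by (subst (asm) measurable_cong) auto
    qed
    have Gmb: "\<bar>Gm a\<bar> \<le> 1" for a unfolding Gm_def by simp
    define pp where "pp \<eta> = exp (- ((t / s1)^2) / 2 + (t / s1) * \<eta>)" for \<eta>
    have inner: "(\<integral>u. Gm (\<eta>, u) \<partial>unif01) = (1 - min 1 (pp \<eta>)) * G S' (t - 2 * \<eta> * s1)" for \<eta>
    proof -
      have "(\<integral>u. Gm (\<eta>, u) \<partial>unif01) = (\<integral>u. (if u \<le> pp \<eta> then 0 else G S' (t - 2 * \<eta> * s1)) \<partial>unif01)"
      proof (rule integral_cong_AE)
        show "(\<lambda>u. Gm (\<eta>, u)) \<in> borel_measurable unif01"
          using Gmm unfolding MM_def by measurable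
        show "(\<lambda>u. if u \<le> pp \<eta> then 0 else G S' (t - 2 * \<eta> * s1)) \<in> borel_measurable unif01" by measurable
        have "AE u in unif01. u \<in> {0<..<1}"
          unfolding unif01_def by (subst AE_uniform_measure) auto
        then show "AE u in unif01. Gm (\<eta>, u) = (if u \<le> pp \<eta> then 0 else G S' (t - 2 * \<eta> * s1))"
        proof (rule AE_mp, intro AE_I2 impI)
          fix u :: real assume u: "u \<in> {0<..<1}"
          show "Gm (\<eta>, u) = (if u \<le> pp \<eta> then 0 else G S' (t - 2 * \<eta> * s1))"
          proof (cases "u \<le> pp \<eta>")
            case True
            then have "stepf s1 t (\<eta>, u) = 0" by (simp add: stepf_eq pp_def)
            then show ?thesis using True by (simp add: Gm_def run_zero)
          next
            case False
            then have st: "stepf s1 t (\<eta>, u) = t - 2 * \<eta> * s1" using t by (simp add: stepf_eq pp_def)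
            have "pp \<eta> < 1" using False u by auto
            then have "- ((t / s1)^2) / 2 + (t / s1) * \<eta> < 0" unfolding pp_def by simp
            then have "(t / s1) * \<eta> < (t / s1) * (t / s1) / 2" by (simp add: power2_eq_square)
            then have "(t / s1) * \<eta> < (t / s1) * ((t / s1) / 2)" by (metis times_divide_eq_right)
            moreover have a0: "t / s1 > 0" using t s1 by simp
            ultimately have "\<eta> < (t / s1) / 2" by (simp only: mult_less_cancel_left_pos[OF a0])
            then have pos: "t - 2 * \<eta> * s1 > 0" using s1 by (simp add: field_simps)
            have "Gm (\<eta>, u) = G (\<Sum>k\<in>{Suc (Suc j)..Suc j + m}. (\<sigma> k)^2) (t - 2 * \<eta> * s1)"
              unfolding Gm_def st using Suc.IH pos by simp
            then show ?thesis using False by (simp add: S'_def)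
          qed
        qed
      qed
      also have "\<dots> = (1 - min 1 (pp \<eta>)) * G S' (t - 2 * \<eta> * s1)"
        by (rule inner_U) (simp add: pp_def)
      finally show ?thesis .
    qed
    have "(\<integral>a. Gm a \<partial>MM) = (\<integral>\<eta>. (\<integral>u. Gm (\<eta>, u) \<partial>unif01) \<partial>std_normal_distribution)"
      unfolding MM_def
      by (rule NU.integral_fst'[symmetric], rule NU.P.integrable_const_bound[where B=1])
         (use Gmb Gmm in \<open>auto simp: MM_def\<close>)
    also have "\<dots> = (\<integral>\<eta>. (1 - min 1 (pp \<eta>)) * G S' (t - 2 * \<eta> * s1) \<partial>std_normal_distribution)"
      by (simp add: inner)
    also have "\<dots> = (\<integral>\<eta>. G S' (t - 2 * \<eta> * s1) \<partial>std_normal_distribution)"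
      unfolding pp_def by (rule reflection[OF s1 G_meas G_bound G_odd])
    also have "\<dots> = G (S' + s1^2) t" by (rule G_step[OF s1 S'])
    also have "S' + s1^2 = (\<Sum>k\<in>{Suc j..j + Suc m}. (\<sigma> k)^2)"
      unfolding S'_def s1_def by (subst sum.atLeast_Suc_atMost) auto
    finally have step3: "(\<integral>a. Gm a \<partial>MM) = G (\<Sum>k\<in>{Suc j..j + Suc m}. (\<sigma> k)^2) t" .
    show "measure M {\<omega> \<in> space M. run \<sigma> j (Suc m) t (\<lambda>k. Y k \<omega>) \<noteq> 0} = G (\<Sum>k\<in>{Suc j..j + Suc m}. (\<sigma> k)^2) t"
      using step1 step2 step3 by (simp add: Fn_def)
  qed
qed


lemma sets_SV[measurable_cong]: "sets (std_normal_vec :: (real^'d) measure) = sets borel"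
  by (simp add: std_normal_vec_def)

theorem mainTheorem15:
  fixes M :: "'w measure"
    and A B :: "nat \<Rightarrow> real^'d^'d"
    and z zt :: "real^'d"
    and xi :: "nat \<Rightarrow> 'w \<Rightarrow> real^'d"
    and U :: "nat \<Rightarrow> 'w \<Rightarrow> real"
    and n :: nat
  assumes "prob_space M"
    and "\<And>k. k \<ge> 1 \<Longrightarrow> invertible (A k)"
    and "\<And>k. k \<ge> 1 \<Longrightarrow> invertible (B k)"
    and "prob_space.indep_vars M (\<lambda>_. std_normal_vec \<Otimes>\<^sub>M unif01)
           (\<lambda>k \<omega>. (xi k \<omega>, U k \<omega>)) {1..}"
    and "\<And>k. k \<ge> 1 \<Longrightarrow> distr M (std_normal_vec \<Otimes>\<^sub>M unif01) (\<lambda>\<omega>. (xi k \<omega>, U k \<omega>))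
                          = std_normal_vec \<Otimes>\<^sub>M unif01"
    and "zt - z \<noteq> 0"
    and "n \<ge> 1"
  shows "measure M {\<omega> \<in> space M.
            fst (coupling A B z zt (\<lambda>k. xi k \<omega>) (\<lambda>k. U k \<omega>) n)
            \<noteq> snd (coupling A B z zt (\<lambda>k. xi k \<omega>) (\<lambda>k. U k \<omega>) n)}
         = 2 * Phi (1 / (2 * sqrt (\<Sum>k = 1..n.
               1 / (norm (matrix_inv (B k) *v (prodA A k *v (zt - z))))\<^sup>2))) - 1"
proof -
  note M = assms(1) and invA = assms(2) and invB = assms(3) and ind = assms(4) and dist = assms(5)
    and dz = assms(6) and n = assms(7)
  interpret Mp: prob_space M by (rule M)
  define v where "v = (\<lambda>k. matrix_inv (B k) *v (prodA A k *v (zt - z)))"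
  define \<sigma> where "\<sigma> = (\<lambda>k. 1 / norm (v k))"
  define w where "w = (\<lambda>k. (1 / norm (v k)) *\<^sub>R v k)"
  define f where "f = (\<lambda>k (p :: (real^'d) \<times> real). (w k \<bullet> fst p, snd p))"
  define Y where "Y = (\<lambda>k \<omega>. f k (xi k \<omega>, U k \<omega>))"
  have v0: "v k \<noteq> 0" if "k \<ge> 1" for k
  proof
    assume "v k = 0"
    moreover have "B k *v v k = prodA A k *v (zt - z)" unfolding v_def by (rule inv_cancel[OF invB[OF that]])
    moreover have "prodA A k *v (zt - z) \<noteq> 0" by (rule invertible_nonzero[OF prodA_invertible[OF invA] dz])
    ultimately show False by simp
  qed
  have sig: "\<sigma> k > 0" if "k \<ge> 1" for k using v0[OF that] by (simp add: \<sigma>_def)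
  have wn: "norm (w k) = 1" if "k \<ge> 1" for k using v0[OF that] by (simp add: w_def)
  have fm[measurable]: "f k \<in> measurable (std_normal_vec \<Otimes>\<^sub>M unif01) MM" for k
    unfolding f_def by measurable
  have indY: "prob_space.indep_vars M (\<lambda>_. MM) Y {1..}"
    unfolding Y_def by (rule prob_space.indep_vars_compose2[OF M ind fm])
  have rvXU: "(\<lambda>\<omega>. (xi k \<omega>, U k \<omega>)) \<in> measurable M (std_normal_vec \<Otimes>\<^sub>M unif01)" if "k \<ge> 1" for k
    using ind that unfolding prob_space.indep_vars_def[OF M] by auto
  have distY: "distr M MM (Y k) = MM" if k: "k \<ge> 1" for k
  proof -
    interpret SV: prob_space "std_normal_vec :: (real^'d) measure" by (rule prob_std_normal_vec)
    interpret U: prob_space unif01 by (rule prob_U)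
    have "distr M MM (Y k) = distr (distr M (std_normal_vec \<Otimes>\<^sub>M unif01) (\<lambda>\<omega>. (xi k \<omega>, U k \<omega>))) MM (f k)"
      by (subst distr_distr[OF fm rvXU[OF k]]) (simp add: Y_def comp_def)
    also have "\<dots> = distr (std_normal_vec \<Otimes>\<^sub>M unif01) MM (f k)" by (simp add: dist[OF k])
    also have "\<dots> = distr (std_normal_vec \<Otimes>\<^sub>M unif01) (borel \<Otimes>\<^sub>M unif01) (\<lambda>(x, y). (w k \<bullet> x, y))"
      by (rule distr_cong) (auto simp: f_def sets_MM intro!: sets_pair_measure_cong simp: unif01_def)
    also have "\<dots> = distr std_normal_vec borel (\<lambda>x. w k \<bullet> x) \<Otimes>\<^sub>M distr unif01 unif01 (\<lambda>x. x)"
      by (rule pair_measure_distr[symmetric]) (auto intro: prob_space_imp_sigma_finite U.prob_space_axioms)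
    also have "\<dots> = MM"
      by (simp add: distr_proj_vec[OF wn[OF k]] MM_def)
    finally show ?thesis .
  qed
  have rec: "measure M {\<omega> \<in> space M. run \<sigma> 0 n 1 (\<lambda>k. Y k \<omega>) \<noteq> 0} = G (\<Sum>k\<in>{Suc 0..0+n}. (\<sigma> k)^2) 1"
    using prob_recursion[OF M indY distY sig] by auto
  have seteq: "{\<omega> \<in> space M. fst (coupling A B z zt (\<lambda>k. xi k \<omega>) (\<lambda>k. U k \<omega>) n)
            \<noteq> snd (coupling A B z zt (\<lambda>k. xi k \<omega>) (\<lambda>k. U k \<omega>) n)}
      = {\<omega> \<in> space M. run \<sigma> 0 n 1 (\<lambda>k. Y k \<omega>) \<noteq> 0}"
  proof -
    have P: "prodA A n *v (zt - z) \<noteq> 0" by (rule invertible_nonzero[OF prodA_invertible[OF invA] dz])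
    have "snd (coupling A B z zt (\<lambda>k. xi k \<omega>) (\<lambda>k. U k \<omega>) n) - fst (coupling A B z zt (\<lambda>k. xi k \<omega>) (\<lambda>k. U k \<omega>) n)
        = run \<sigma> 0 n 1 (\<lambda>k. Y k \<omega>) *\<^sub>R (prodA A n *v (zt - z))" for \<omega>
      using coupling_diff[OF invA invB dz, where xi="\<lambda>k. xi k \<omega>" and u="\<lambda>k. U k \<omega>" and k=n]
      by (simp add: \<sigma>_def Y_def f_def w_def v_def)
    note eq = this
    have iff: "(fst (coupling A B z zt (\<lambda>k. xi k \<omega>) (\<lambda>k. U k \<omega>) n)
            \<noteq> snd (coupling A B z zt (\<lambda>k. xi k \<omega>) (\<lambda>k. U k \<omega>) n)) = (run \<sigma> 0 n 1 (\<lambda>k. Y k \<omega>) \<noteq> 0)" for \<omega>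
    proof -
      have "(fst (coupling A B z zt (\<lambda>k. xi k \<omega>) (\<lambda>k. U k \<omega>) n)
            \<noteq> snd (coupling A B z zt (\<lambda>k. xi k \<omega>) (\<lambda>k. U k \<omega>) n))
          = (snd (coupling A B z zt (\<lambda>k. xi k \<omega>) (\<lambda>k. U k \<omega>) n) - fst (coupling A B z zt (\<lambda>k. xi k \<omega>) (\<lambda>k. U k \<omega>) n) \<noteq> 0)"
        by auto
      also have "\<dots> = (run \<sigma> 0 n 1 (\<lambda>k. Y k \<omega>) *\<^sub>R (prodA A n *v (zt - z)) \<noteq> 0)" by (simp only: eq)
      also have "\<dots> = (run \<sigma> 0 n 1 (\<lambda>k. Y k \<omega>) \<noteq> 0)" using P by simp
      finally show ?thesis .
    qed
    show ?thesis by (simp only: iff)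
  qed
  have pos: "(\<Sum>k\<in>{Suc 0..0+n}. (\<sigma> k)^2) > 0"
  proof (rule sum_pos)
    show "finite {Suc 0..0+n}" by simp
    show "{Suc 0..0+n} \<noteq> {}" using n by simp
    fix i assume "i \<in> {Suc 0..0+n}"
    then have "\<sigma> i > 0" by (intro sig) auto
    then show "(\<sigma> i)^2 > 0" by simp
  qed
  have sumeq: "(\<Sum>k\<in>{Suc 0..0+n}. (\<sigma> k)^2) = (\<Sum>k = 1..n. 1 / (norm (matrix_inv (B k) *v (prodA A k *v (zt - z))))\<^sup>2)"
    by (simp add: \<sigma>_def v_def power_one_over)
  show ?thesis
    using pos unfolding seteq rec sumeq by (simp add: G_def)
qed

end
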